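(* Let $p\ge5$ be a prime. Then \[ \sum_{j=0}^{p-3}B_j\equiv-1\pmod p . \]
   Context: $B_j$ is the $j$th Bernoulli number ($\frac{t}{e^t-1}=\sum_{m\ge0}B_m\frac{t^m}{m!}$). For rationals whose denominators are coprime to $p$, $a\equiv b\pmod p$ means $a-b$ is $p$ times a rational with denominator coprime to $p$. *)

theory Defs
  imports Complex_Main "HOL-Computational_Algebra.Primes"
begin

text \<open>Bernoulli numbers with the convention t/(e^t-1) = sum B_m t^m/m!, i.e. B_1 = -1/2,
  given by the recurrence  sum_{k=0}^{m} (m+1 choose k) B_k = [m = 0].\<close>
fun bernoulli :: "nat \<Rightarrow> rat" where
  "bernoulli n = (if n = 0 then 1
     else - (\<Sum>k<n. (of_nat ((n + 1) choose k) * bernoulli k)) / of_nat (n + 1))"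

declare bernoulli.simps [simp del]

definition p_integral :: "nat \<Rightarrow> rat \<Rightarrow> bool" where
  "p_integral p x = coprime (snd (quotient_of x)) (int p)"

definition rat_cong :: "rat \<Rightarrow> rat \<Rightarrow> nat \<Rightarrow> bool" where
  "rat_cong a b p = (\<exists>c. p_integral p c \<and> a - b = of_nat p * c)"

end

theory Submission
  imports Defs "HOL-Computational_Algebra.Formal_Power_Series"
begin
unbundle fps_syntax

definition pint :: "nat \<Rightarrow> rat \<Rightarrow> bool" where
  "pint p x = (\<exists>a b. coprime b (int p) \<and> x = of_int a / of_int b)"

lemma p_integral_iff: "p_integral p x = pint p x"
proof
  assume "p_integral p x"
  then show "pint p x"
    unfolding p_integral_def pint_def
    by (metis prod.collapse quotient_of_div)
next
  assume "pint p x"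
  then obtain a b where cb: "coprime b (int p)" and x: "x = of_int a / of_int b"
    unfolding pint_def by blast
  obtain n d where q: "quotient_of x = (n, d)" by (cases "quotient_of x")
  have d0: "d > 0" using q quotient_of_denom_pos by blast
  have cnd: "coprime n d" using q quotient_of_coprime by blast
  have xnd: "x = of_int n / of_int d" using q quotient_of_div by blast
  show "p_integral p x"
  proof (cases "b = 0")
    case True
    then have "x = 0" using x by simp
    then have "d = 1" using q by simp
    then show ?thesis using q by (simp add: p_integral_def)
  next
    case False
    have "of_int n * of_int b = (of_int a * of_int d :: rat)"
      using x xnd False d0 by (simp add: field_simps)
    then have "n * b = a * d" by (metis of_int_eq_iff of_int_mult)
    then have "d dvd n * b" by simp
    then have "d dvd b" using cnd by (metis coprime_commute coprime_dvd_mult_right_iff)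
    then have "coprime d (int p)" using cb coprime_divisors by (metis dvd_refl)
    then show ?thesis using q by (simp add: p_integral_def)
  qed
qed

lemma pint_int: "pint p (of_int a)"
  unfolding pint_def by (rule exI[of _ a], rule exI[of _ 1]) simp

lemma pint_add: "pint p x \<Longrightarrow> pint p y \<Longrightarrow> pint p (x + y)"
  unfolding pint_def
proof (elim exE conjE)
  fix a b c d assume h: "coprime b (int p)" "x = of_int a / of_int b" "coprime d (int p)" "y = of_int c / of_int d"
  show "\<exists>a b. coprime b (int p) \<and> x + y = of_int a / of_int b"
  proof (cases "b = 0 \<or> d = 0")
    case True
    then show ?thesis using h by (metis add.commute add_0 div_by_0 of_int_0)
  next
    case False
    then have "x + y = of_int (a*d + c*b) / of_int (b*d)" using h by (simp add: field_simps)
    moreover have "coprime (b*d) (int p)" using h by simp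
    ultimately show ?thesis by blast
  qed
qed

lemma pint_mult: "pint p x \<Longrightarrow> pint p y \<Longrightarrow> pint p (x * y)"
  unfolding pint_def
proof (elim exE conjE)
  fix a b c d assume h: "coprime b (int p)" "x = of_int a / of_int b" "coprime d (int p)" "y = of_int c / of_int d"
  have "x * y = of_int (a*c) / of_int (b*d)" using h by simp
  moreover have "coprime (b*d) (int p)" using h by simp
  ultimately show "\<exists>a b. coprime b (int p) \<and> x * y = of_int a / of_int b" by blast
qed

lemma pint_div: "pint p x \<Longrightarrow> coprime m p \<Longrightarrow> pint p (x / of_nat m)"
  unfolding pint_def
proof (elim exE conjE)
  fix a b assume h: "coprime b (int p)" "x = of_int a / of_int b" "coprime m p"
  have "x / of_nat m = of_int a / of_int (b * int m)" using h by simp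
  moreover have "coprime (b * int m) (int p)" using h by simp
  ultimately show "\<exists>a b. coprime b (int p) \<and> x / of_nat m = of_int a / of_int b" by blast
qed

lemma pint_sum: "(\<And>i. i \<in> A \<Longrightarrow> pint p (f i)) \<Longrightarrow> pint p (\<Sum>i\<in>A. f i)"
  apply (induction A rule: infinite_finite_induct)
  using pint_int[of p 0] by (auto intro: pint_add)

lemma pint_neg: "pint p x \<Longrightarrow> pint p (- x)"
  using pint_mult[OF pint_int[of p "-1"]] by simp

lemma bern_rec: "n > 0 \<Longrightarrow> (\<Sum>k\<le>n. of_nat ((n + 1) choose k) * bernoulli k) = 0"
proof -
  assume n: "n > 0"
  have "bernoulli n = - (\<Sum>k<n. (of_nat ((n + 1) choose k) * bernoulli k)) / of_nat (n + 1)"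
    using n by (subst bernoulli.simps) simp
  then have "of_nat (n+1) * bernoulli n = - (\<Sum>k<n. (of_nat ((n + 1) choose k) * bernoulli k))"
    by (simp add: field_simps del: of_nat_Suc)
  moreover have "(n+1) choose n = n + 1" by (metis Suc_eq_plus1 binomial_Suc_n)
  ultimately show ?thesis by (simp add: lessThan_Suc_atMost[symmetric] del: of_nat_Suc)
qed

lemma bern1: "bernoulli 1 = - 1/2"
  by (subst bernoulli.simps) (simp add: bernoulli.simps)

lemma bern_pint: "n + 2 \<le> p \<Longrightarrow> prime p \<Longrightarrow> pint p (bernoulli n)"
proof (induction n rule: less_induct)
  case (less n)
  show ?case
  proof (cases "n = 0")
    case True then show ?thesis using pint_int[of p 1] by (simp add: bernoulli.simps)
  next
    case False
    have eq: "bernoulli n = - (\<Sum>k<n. (of_nat ((n + 1) choose k) * bernoulli k)) / of_nat (n + 1)"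
      using False by (subst bernoulli.simps) simp
    have "coprime (n+1) p"
      using less.prems by (metis add_le_same_cancel1 le_add2 le_trans not_less_eq_eq one_add_one coprime_commute prime_imp_coprime_nat dvd_imp_le zero_less_Suc add_2_eq_Suc' nat_dvd_not_less Suc_eq_plus1 less_add_same_cancel1 zero_less_two add.commute)
    moreover have "pint p (- (\<Sum>k<n. (of_nat ((n + 1) choose k) * bernoulli k)))"
      apply (rule pint_neg, rule pint_sum, rule pint_mult)
      using pint_int[of p "int _"] apply simp
      using less by simp
    ultimately show ?thesis using eq pint_div by metis
  qed
qed


lemma bern0: "bernoulli 0 = 1" by (simp add: bernoulli.simps)

definition Bf :: "rat fps" where "Bf = Abs_fps (\<lambda>n. bernoulli n / fact n)"
definition Bn :: "rat fps" where "Bn = Abs_fps (\<lambda>n. (-1)^n * bernoulli n / fact n)"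

lemma coeff_prod_gen:
  "(Abs_fps (\<lambda>n. c^n * bernoulli n / fact n) * (fps_exp c - 1)) $ n
     = c^n * (\<Sum>k<n. of_nat (n choose k) * bernoulli k) / fact n"
proof -
  have "(Abs_fps (\<lambda>n. c^n * bernoulli n / fact n) * (fps_exp c - 1)) $ n
      = (\<Sum>i=0..n. c^i * bernoulli i / fact i * (c^(n-i) / fact (n-i) - (if n - i = 0 then 1 else 0)))"
    by (simp add: fps_mult_nth)
  also have "\<dots> = (\<Sum>i<n. c^n * (of_nat (n choose i) * bernoulli i) / fact n)"
  proof -
    have "(\<Sum>i=0..n. c^i * bernoulli i / fact i * (c^(n-i) / fact (n-i) - (if n - i = 0 then 1 else 0)))
       = (\<Sum>i<n. c^i * bernoulli i / fact i * (c^(n-i) / fact (n-i) - (if n - i = 0 then 1 else 0)))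
         + c^n * bernoulli n / fact n * (c^0 / fact 0 - 1)"
      by (simp add: atLeast0AtMost lessThan_Suc_atMost[symmetric] mult_ac)
    also have "\<dots> = (\<Sum>i<n. c^i * bernoulli i / fact i * (c^(n-i) / fact (n-i)))" by (auto intro!: sum.cong)
    also have "\<dots> = (\<Sum>i<n. c^n * (of_nat (n choose i) * bernoulli i) / fact n)"
    proof (rule sum.cong[OF refl])
      fix i assume "i \<in> {..<n}"
      then have i: "i \<le> n" by simp
      have "c^i * c^(n-i) = c^n" using i by (simp add: power_add[symmetric])
      moreover have "of_nat (n choose i) = (fact n / (fact i * fact (n-i)) :: rat)"
        using i by (simp add: binomial_fact)
      ultimately show "c^i * bernoulli i / fact i * (c^(n-i) / fact (n-i)) = c^n * (of_nat (n choose i) * bernoulli i) / fact n"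
        by (simp add: field_simps)
    qed
    finally show ?thesis .
  qed
  also have "\<dots> = c^n * (\<Sum>k<n. of_nat (n choose k) * bernoulli k) / fact n"
    by (simp add: sum_distrib_left sum_divide_distrib)
  finally show ?thesis .
qed

lemma sum_rec: "(\<Sum>k<n. of_nat (n choose k) * bernoulli k) = (if n = 1 then 1 else 0)"
proof -
  consider "n = 0" | "n = 1" | m where "n = m + 1" "m > 0" by (metis add.commute add_0 gr0I less_one nat_neq_iff add_diff_inverse_nat)
  then show ?thesis
  proof cases
    case 3
    then show ?thesis using bern_rec[of m] by (simp add: lessThan_Suc_atMost[symmetric])
  qed (auto simp: bernoulli.simps)
qed

lemma prod_gen: "Abs_fps (\<lambda>n. c^n * bernoulli n / fact n) * (fps_exp c - 1) = fps_const c * fps_X"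
proof (rule fps_ext)
  fix n
  show "(Abs_fps (\<lambda>n. c^n * bernoulli n / fact n) * (fps_exp c - 1)) $ n = (fps_const c * fps_X) $ n"
    by (cases "n = 1") (simp_all add: coeff_prod_gen sum_rec bern0)
qed

lemma Bf_eq: "Bf * (fps_exp 1 - 1) = fps_X"
  using prod_gen[of 1] by (simp add: Bf_def)

lemma Bn_eq: "Bn * (fps_exp (-1) - 1) = - fps_X"
proof -
  have "fps_const (-1::rat) = -1" by (metis fps_const_neg fps_const_1_eq_1)
  then show ?thesis using prod_gen[of "-1"] by (simp add: Bn_def)
qed

lemma D_nz: "fps_exp (1::rat) - 1 \<noteq> 0"
proof
  assume "fps_exp (1::rat) - 1 = 0"
  then have "(fps_exp (1::rat) - 1) $ 1 = 0" by simp
  then show False by simp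
qed

lemma Bn_Bf: "Bn - fps_X = Bf"
proof -
  let ?E = "fps_exp (1::rat)" and ?E' = "fps_exp (-1::rat)"
  have EE: "?E * ?E' = 1" using fps_exp_add_mult[of "1::rat" "-1"] by simp
  have "Bn * (?E' - 1) * ?E = - fps_X * ?E" using Bn_eq by simp
  then have "Bn * (?E * ?E' - ?E) = - fps_X * ?E" by (simp add: algebra_simps)
  then have "Bn * (?E - 1) = fps_X * ?E" using EE by (simp add: algebra_simps)
  then have "(Bn - fps_X) * (?E - 1) = fps_X" by (simp add: algebra_simps)
  then have "(Bn - fps_X) * (?E - 1) = Bf * (?E - 1)" using Bf_eq by simp
  then show ?thesis using D_nz by simp
qed

lemma bern_odd: "odd n \<Longrightarrow> n \<noteq> 1 \<Longrightarrow> bernoulli n = 0"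
proof -
  assume "odd n" "n \<noteq> 1"
  have "(Bn - fps_X) $ n = Bf $ n" using Bn_Bf by simp
  then have "- bernoulli n / fact n = bernoulli n / fact n"
    using \<open>odd n\<close> \<open>n \<noteq> 1\<close> by (simp add: Bn_def Bf_def)
  then show ?thesis by (simp add: field_simps)
qed


lemma binom_mod:
  assumes "prime p" shows "k \<le> p - 1 \<Longrightarrow> \<exists>m. int ((p-1) choose k) = (-1)^k + int p * m"
proof (induction k)
  case 0
  then show ?case by (intro exI[of _ 0]) simp
next
  case (Suc k)
  then obtain m where m: "int ((p-1) choose k) = (-1)^k + int p * m" by auto
  have p1: "p = Suc (p - 1)" using assms prime_gt_0_nat by simp
  have "p dvd (p choose (Suc k))"
    using Suc.prems assms by (intro dvd_choose_prime) (auto simp: prime_gt_0_nat)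
  then obtain t where t: "p choose (Suc k) = p * t" by blast
  have "p choose (Suc k) = ((p-1) choose k) + ((p-1) choose (Suc k))"
    by (subst p1) (simp only: binomial_Suc_Suc)
  then have "int (p * t) = int ((p-1) choose k) + int ((p-1) choose (Suc k))" using t by (metis of_nat_add)
  then have "int ((p-1) choose (Suc k)) = int p * int t - int ((p-1) choose k)" by simp
  also have "\<dots> = (-1)^(Suc k) + int p * (int t - m)" using m by (simp add: algebra_simps)
  finally show ?case by blast
qed

theorem corollary4:
  fixes p :: nat
  assumes "prime p" and "p \<ge> 5"
  shows "rat_cong (\<Sum>j=0..p-3. bernoulli j) (-1) p"
proof -
  define m where "m k = (SOME m. int ((p-1) choose k) = (-1)^k + int p * m)" for k
  have m: "int ((p-1) choose k) = (-1)^k + int p * m k" if "k \<le> p - 1" for k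
    unfolding m_def using someI_ex[OF binom_mod[OF assms(1) that]] .
  have rec: "(\<Sum>k\<le>p-2. of_nat ((p-1) choose k) * bernoulli k) = 0"
    using bern_rec[of "p-2"] assms(2) by (simp add: Suc_diff_Suc numeral_2_eq_2)
  have "(\<Sum>k\<le>p-2. of_nat ((p-1) choose k) * bernoulli k)
      = (\<Sum>k\<le>p-2. ((-1)^k + of_nat p * of_int (m k)) * bernoulli k)"
  proof (rule sum.cong[OF refl])
    fix k assume "k \<in> {..p-2}"
    then have "k \<le> p - 1" by simp
    then have "rat_of_int (int ((p-1) choose k)) = of_int ((-1)^k + int p * m k)" using m by simp
    then show "of_nat ((p-1) choose k) * bernoulli k = ((-1)^k + of_nat p * of_int (m k)) * bernoulli k"
      by simp
  qed
  also have "\<dots> = (\<Sum>k\<le>p-2. bernoulli k) + 1 + of_nat p * (\<Sum>k\<le>p-2. of_int (m k) * bernoulli k)"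
  proof -
    have e: "(-1)^k * bernoulli k = bernoulli k + (if k = 1 then 1 else 0)" for k
    proof (cases "even k")
      case False
      then show ?thesis by (cases "k = 1") (simp_all add: bern1[unfolded One_nat_def] bern_odd)
    qed auto
    have "(\<Sum>k\<le>p-2. ((-1)^k + of_nat p * of_int (m k)) * bernoulli k)
       = (\<Sum>k\<le>p-2. (-1)^k * bernoulli k) + of_nat p * (\<Sum>k\<le>p-2. of_int (m k) * bernoulli k)"
      by (simp add: distrib_right sum.distrib sum_distrib_left mult.assoc)
    also have "(\<Sum>k\<le>p-2. (-1)^k * bernoulli k) = (\<Sum>k\<le>p-2. bernoulli k + (if k = 1 then 1 else 0))"
      by (rule sum.cong[OF refl], rule e)
    also have "\<dots> = (\<Sum>k\<le>p-2. bernoulli k) + (\<Sum>k\<le>p-2. (if k = 1 then 1 else (0::rat)))"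
      by (rule sum.distrib)
    also have "(\<Sum>k\<le>p-2. (if k = 1 then 1 else (0::rat))) = 1"
      using assms(2) by (simp add: sum.delta)
    finally show ?thesis .
  qed
  finally have main: "(\<Sum>k\<le>p-2. bernoulli k) + 1 = of_nat p * (- (\<Sum>k\<le>p-2. of_int (m k) * bernoulli k))"
    using rec by (simp add: algebra_simps)
  have "odd p" using assms by (intro prime_odd_nat) auto
  then have "odd (p - 2)" using assms(2) by simp
  then have z: "bernoulli (p-2) = 0" using assms(2) by (intro bern_odd) auto
  have "{..p-2} = insert (p-2) {0..p-3}" using assms(2) by auto
  then have "(\<Sum>k\<le>p-2. bernoulli k) = (\<Sum>j=0..p-3. bernoulli j)" using z assms(2) by simp
  then have eq: "(\<Sum>j=0..p-3. bernoulli j) - (-1) = of_nat p * (- (\<Sum>k\<le>p-2. of_int (m k) * bernoulli k))"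
    using main by simp
  have "pint p (- (\<Sum>k\<le>p-2. of_int (m k) * bernoulli k))"
    apply (rule pint_neg, rule pint_sum, rule pint_mult[OF pint_int])
    using bern_pint assms by auto
  then show ?thesis unfolding rat_cong_def p_integral_iff using eq by blast
qed

end
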